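(* Let $X$ be an arbitrary set, let $E$ be an equivalence relation on $X$ whose partition into $E$-classes is an $m$-partition $\mathcal{P}=\{X_1,\ldots,X_m\}$ (with $m$ a positive integer), and let $f\in T(X,\mathcal{P})$. Then the following are equivalent: (i) $f\in\Sigma(X,\mathcal{P})$; (ii) $\chi^{(f)}$ is a bijection of $\{1,\ldots,m\}$; (iii) $f$ is $E^*$-preserving; (iv) $f\in S_{\mathcal{P}}(X)$ and $Af^{-1}\neq\emptyset$ for every nonempty open set $A\subseteq X$.
   Context: Maps are written on the right; $Af^{-1}=\{x\mid xf\in A\}$. $T(X,\mathcal{P})=\{f\colon X\to X\mid \forall i\ \exists j:\ X_if\subseteq X_j\}$ and $\Sigma(X,\mathcal{P})=\{f\in T(X,\mathcal{P})\mid Xf\cap X_i\neq\emptyset\ \forall i\}$. For $f\in T(X,\mathcal{P})$, $\chi^{(f)}\colon\{1,\ldots,m\}\to\{1,\ldots,m\}$ is given by $i\chi^{(f)}=j$ whenever $X_if\subseteq X_j$. A map $f$ is $E^*$-preserving if $(x,y)\in E\iff(xf,yf)\in E$ for all $x,y\in X$. The topology on $X$ with $\mathcal{P}$ as a basis has as open sets exactly the unions of blocks; $S_{\mathcal{P}}(X)$ is the set of continuous selfmaps of $X$ for this topology. *)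

theory Defs
  imports "HOL-Analysis.Analysis"
begin

definition is_class_partition :: "'a set \<Rightarrow> 'a rel \<Rightarrow> nat \<Rightarrow> (nat \<Rightarrow> 'a set) \<Rightarrow> bool" where
  "is_class_partition X E m P \<longleftrightarrow>
     equiv X E \<and> X // E = P ` {1..m} \<and> inj_on P {1..m}"

definition T_part :: "'a set \<Rightarrow> nat \<Rightarrow> (nat \<Rightarrow> 'a set) \<Rightarrow> ('a \<Rightarrow> 'a) set" where
  "T_part X m P = {f. (\<forall>x\<in>X. f x \<in> X) \<and>
                      (\<forall>i\<in>{1..m}. \<exists>j\<in>{1..m}. f ` P i \<subseteq> P j)}"

definition Sigma_part :: "'a set \<Rightarrow> nat \<Rightarrow> (nat \<Rightarrow> 'a set) \<Rightarrow> ('a \<Rightarrow> 'a) set" where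
  "Sigma_part X m P = {f \<in> T_part X m P. \<forall>i\<in>{1..m}. f ` X \<inter> P i \<noteq> {}}"

definition chi :: "nat \<Rightarrow> (nat \<Rightarrow> 'a set) \<Rightarrow> ('a \<Rightarrow> 'a) \<Rightarrow> nat \<Rightarrow> nat" where
  "chi m P f i = (THE j. j \<in> {1..m} \<and> f ` P i \<subseteq> P j)"

definition E_star_preserving :: "'a set \<Rightarrow> 'a rel \<Rightarrow> ('a \<Rightarrow> 'a) \<Rightarrow> bool" where
  "E_star_preserving X E f \<longleftrightarrow> (\<forall>x\<in>X. \<forall>y\<in>X. (x, y) \<in> E \<longleftrightarrow> (f x, f y) \<in> E)"

definition part_topology :: "nat \<Rightarrow> (nat \<Rightarrow> 'a set) \<Rightarrow> 'a topology" where
  "part_topology m P = topology (\<lambda>U. \<exists>I \<subseteq> {1..m}. U = \<Union> (P ` I))"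

definition S_part :: "nat \<Rightarrow> (nat \<Rightarrow> 'a set) \<Rightarrow> ('a \<Rightarrow> 'a) set" where
  "S_part m P = {f. continuous_map (part_topology m P) (part_topology m P) f}"

end

theory Submission
  imports Defs
begin

lemma part_istop:
  assumes disj: "\<And>i k. i \<in> {1..m} \<Longrightarrow> k \<in> {1..m} \<Longrightarrow> i \<noteq> k \<Longrightarrow> P i \<inter> P k = {}"
  shows "istopology (\<lambda>U. \<exists>I \<subseteq> {1..m}. U = \<Union> (P ` I))"
  unfolding istopology_def
proof (intro conjI allI impI)
  fix S T
  assume "\<exists>I\<subseteq>{1..m}. S = \<Union> (P ` I)" "\<exists>I\<subseteq>{1..m}. T = \<Union> (P ` I)"
  then obtain I J where IJ: "I \<subseteq> {1..m}" "S = \<Union> (P ` I)" "J \<subseteq> {1..m}" "T = \<Union> (P ` J)"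
    by blast
  have "S \<inter> T \<subseteq> \<Union> (P ` (I \<inter> J))"
  proof
    fix x assume "x \<in> S \<inter> T"
    then obtain i j where ij: "i \<in> I" "j \<in> J" "x \<in> P i" "x \<in> P j" using IJ by blast
    have "i \<in> {1..m}" "j \<in> {1..m}" using ij IJ by auto
    then have "i = j" using disj[of i j] ij by blast
    then show "x \<in> \<Union> (P ` (I \<inter> J))" using ij by blast
  qed
  moreover have "\<Union> (P ` (I \<inter> J)) \<subseteq> S \<inter> T" unfolding IJ by blast
  ultimately have "S \<inter> T = \<Union> (P ` (I \<inter> J))" by (rule antisym)
  moreover have "I \<inter> J \<subseteq> {1..m}" using IJ by blast
  ultimately show "\<exists>I\<subseteq>{1..m}. S \<inter> T = \<Union> (P ` I)" by blast
next
  fix K assume K: "\<forall>S\<in>K. \<exists>I\<subseteq>{1..m}. S = \<Union> (P ` I)"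
  define I where "I = {i \<in> {1..m}. P i \<subseteq> \<Union>K}"
  have "\<Union>K \<subseteq> \<Union> (P ` I)"
  proof
    fix x assume "x \<in> \<Union>K"
    then obtain S where S: "S \<in> K" "x \<in> S" by blast
    then obtain J where J: "J \<subseteq> {1..m}" "S = \<Union> (P ` J)" using K by blast
    then obtain i where i: "i \<in> J" "x \<in> P i" using S by blast
    have "P i \<subseteq> S" using J i by blast
    then have "P i \<subseteq> \<Union>K" using S by blast
    moreover have "i \<in> {1..m}" using J i by blast
    ultimately have "i \<in> I" unfolding I_def by blast
    then show "x \<in> \<Union> (P ` I)" using i by blast
  qed
  moreover have "\<Union> (P ` I) \<subseteq> \<Union>K" unfolding I_def by blast
  ultimately have "\<Union>K = \<Union> (P ` I)" by (rule antisym)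
  moreover have "I \<subseteq> {1..m}" unfolding I_def by blast
  ultimately show "\<exists>I\<subseteq>{1..m}. \<Union>K = \<Union> (P ` I)" by blast
qed

lemma part_open_iff:
  assumes disj: "\<And>i k. i \<in> {1..m} \<Longrightarrow> k \<in> {1..m} \<Longrightarrow> i \<noteq> k \<Longrightarrow> P i \<inter> P k = {}"
  shows "openin (part_topology m P) U \<longleftrightarrow> (\<exists>I \<subseteq> {1..m}. U = \<Union> (P ` I))"
proof -
  have "openin (part_topology m P) = (\<lambda>U. \<exists>I \<subseteq> {1..m}. U = \<Union> (P ` I))"
    unfolding part_topology_def by (rule topology_inverse'[OF part_istop[OF disj]])
  then show ?thesis by (rule fun_cong)
qed

theorem corollary3p5:
  fixes X :: "'a set" and E :: "'a rel" and m :: nat and P :: "nat \<Rightarrow> 'a set"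
    and f :: "'a \<Rightarrow> 'a"
  assumes "m \<ge> 1"
    and "is_class_partition X E m P"
    and "f \<in> T_part X m P"
  shows "(f \<in> Sigma_part X m P \<longleftrightarrow> bij_betw (chi m P f) {1..m} {1..m})
       \<and> (bij_betw (chi m P f) {1..m} {1..m} \<longleftrightarrow> E_star_preserving X E f)
       \<and> (E_star_preserving X E f \<longleftrightarrow>
            (f \<in> S_part m P \<and>
             (\<forall>A. openin (part_topology m P) A \<and> A \<noteq> {} \<longrightarrow> {x \<in> X. f x \<in> A} \<noteq> {})))"
proof -
  have eq: "equiv X E" and Q: "X // E = P ` {1..m}" and injP: "inj_on P {1..m}"
    using assms(2) unfolding is_class_partition_def by auto
  have fX: "\<And>x. x \<in> X \<Longrightarrow> f x \<in> X" and fT: "\<And>i. i \<in> {1..m} \<Longrightarrow> \<exists>j\<in>{1..m}. f ` P i \<subseteq> P j"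
    using assms(3) unfolding T_part_def by auto
  have PQ: "\<And>i. i \<in> {1..m} \<Longrightarrow> P i \<in> X // E" using Q by auto
  have ne: "\<And>i. i \<in> {1..m} \<Longrightarrow> P i \<noteq> {}"
    using PQ in_quotient_imp_non_empty[OF eq] by blast
  have sub: "\<And>i. i \<in> {1..m} \<Longrightarrow> P i \<subseteq> X"
    using PQ in_quotient_imp_subset[OF eq] by blast
  have disj: "\<And>i k. i \<in> {1..m} \<Longrightarrow> k \<in> {1..m} \<Longrightarrow> i \<noteq> k \<Longrightarrow> P i \<inter> P k = {}"
  proof -
    fix i k assume "i \<in> {1..m}" "k \<in> {1..m}" "i \<noteq> k"
    then have "P i \<noteq> P k" using injP by (meson inj_on_eq_iff)
    then show "P i \<inter> P k = {}" using quotient_disj[OF eq PQ PQ] \<open>i \<in> _\<close> \<open>k \<in> _\<close> by blast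
  qed
  have cover: "\<And>x. x \<in> X \<Longrightarrow> \<exists>i\<in>{1..m}. x \<in> P i"
  proof -
    fix x assume "x \<in> X"
    then have "x \<in> \<Union>(X // E)" using Union_quotient[OF eq] by simp
    then show "\<exists>i\<in>{1..m}. x \<in> P i" using Q by auto
  qed
  have Erel: "\<And>x y i k. i \<in> {1..m} \<Longrightarrow> k \<in> {1..m} \<Longrightarrow> x \<in> P i \<Longrightarrow> y \<in> P k \<Longrightarrow>
      (x, y) \<in> E \<longleftrightarrow> i = k"
  proof -
    fix x y i k assume a: "i \<in> {1..m}" "k \<in> {1..m}" "x \<in> P i" "y \<in> P k"
    have "(x, y) \<in> E \<longleftrightarrow> P i = P k"
      using quotient_eq_iff[OF eq PQ[OF a(1)] PQ[OF a(2)] a(3) a(4)] by simp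
    also have "\<dots> \<longleftrightarrow> i = k" using injP a(1,2) by (meson inj_on_eq_iff)
    finally show "(x, y) \<in> E \<longleftrightarrow> i = k" .
  qed
  define c where "c = chi m P f"
  have uniq: "\<And>i j. i \<in> {1..m} \<Longrightarrow> j \<in> {1..m} \<Longrightarrow> f ` P i \<subseteq> P j \<Longrightarrow> c i = j"
  proof -
    fix i j assume a: "i \<in> {1..m}" "j \<in> {1..m}" "f ` P i \<subseteq> P j"
    show "c i = j" unfolding c_def chi_def
    proof (rule the_equality)
      fix j' assume b: "j' \<in> {1..m} \<and> f ` P i \<subseteq> P j'"
      obtain x where "x \<in> P i" using ne a(1) by blast
      then have "f x \<in> P j" "f x \<in> P j'" using a b by auto
      then show "j' = j" using disj[of j j'] a b by blast
    qed (use a in auto)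
  qed
  have cprop: "\<And>i. i \<in> {1..m} \<Longrightarrow> c i \<in> {1..m} \<and> f ` P i \<subseteq> P (c i)"
  proof -
    fix i assume i: "i \<in> {1..m}"
    then obtain j where j: "j \<in> {1..m}" "f ` P i \<subseteq> P j" using fT by blast
    then show "c i \<in> {1..m} \<and> f ` P i \<subseteq> P (c i)" using uniq[OF i j] by simp
  qed
  have cin: "\<And>x i. i \<in> {1..m} \<Longrightarrow> x \<in> P i \<Longrightarrow> f x \<in> P (c i)" using cprop by blast
  have cmap: "c ` {1..m} \<subseteq> {1..m}" using cprop by blast
  have bij_surj: "bij_betw c {1..m} {1..m} \<longleftrightarrow> c ` {1..m} = {1..m}"
    using finite_surj_inj[of "{1..m}" c] unfolding bij_betw_def by auto
  have bij_inj: "bij_betw c {1..m} {1..m} \<longleftrightarrow> inj_on c {1..m}"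
    using endo_inj_surj[of "{1..m}" c] cmap unfolding bij_betw_def by auto
  have hitP: "\<And>j x. j \<in> {1..m} \<Longrightarrow> x \<in> X \<Longrightarrow> f x \<in> P j \<Longrightarrow> \<exists>i\<in>{1..m}. x \<in> P i \<and> c i = j"
  proof -
    fix j x assume a: "j \<in> {1..m}" "x \<in> X" "f x \<in> P j"
    obtain i where i: "i \<in> {1..m}" "x \<in> P i" using cover a(2) by blast
    have "f x \<in> P (c i)" using cin i by blast
    then have "c i = j" using disj[of "c i" j] a cprop i by blast
    then show "\<exists>i\<in>{1..m}. x \<in> P i \<and> c i = j" using i by blast
  qed
  have surjiff: "c ` {1..m} = {1..m} \<longleftrightarrow> (\<forall>j\<in>{1..m}. \<exists>x\<in>X. f x \<in> P j)"
  proof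
    assume s: "c ` {1..m} = {1..m}"
    show "\<forall>j\<in>{1..m}. \<exists>x\<in>X. f x \<in> P j"
    proof
      fix j assume "j \<in> {1..m}"
      then obtain i where i: "i \<in> {1..m}" "c i = j" using s by (metis imageE)
      obtain x where "x \<in> P i" using ne i by blast
      then show "\<exists>x\<in>X. f x \<in> P j" using cin i sub by blast
    qed
  next
    assume h: "\<forall>j\<in>{1..m}. \<exists>x\<in>X. f x \<in> P j"
    have "{1..m} \<subseteq> c ` {1..m}"
    proof
      fix j assume j: "j \<in> {1..m}"
      then obtain x where "x \<in> X" "f x \<in> P j" using h by blast
      then show "j \<in> c ` {1..m}" using hitP j by blast
    qed
    then show "c ` {1..m} = {1..m}" using cmap by blast
  qed
  have part1: "f \<in> Sigma_part X m P \<longleftrightarrow> bij_betw c {1..m} {1..m}"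
    unfolding Sigma_part_def bij_surj surjiff using assms(3) by blast
  have part2: "E_star_preserving X E f \<longleftrightarrow> inj_on c {1..m}"
  proof
    assume h: "E_star_preserving X E f"
    show "inj_on c {1..m}"
    proof (rule inj_onI)
      fix i k assume a: "i \<in> {1..m}" "k \<in> {1..m}" "c i = c k"
      obtain x where x: "x \<in> P i" using ne a by blast
      obtain y where y: "y \<in> P k" using ne a by blast
      have ci: "c i \<in> {1..m}" "c k \<in> {1..m}" using cprop a by auto
      have fxy: "f x \<in> P (c i)" "f y \<in> P (c k)" using cin[OF a(1) x] cin[OF a(2) y] by auto
      have "(f x, f y) \<in> E" using Erel[OF ci fxy] a(3) by simp
      then have "(x, y) \<in> E" using h sub x y a unfolding E_star_preserving_def by blast
      then show "i = k" using Erel a x y by blast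
    qed
  next
    assume h: "inj_on c {1..m}"
    show "E_star_preserving X E f" unfolding E_star_preserving_def
    proof (intro ballI)
      fix x y assume "x \<in> X" "y \<in> X"
      then obtain i k where a: "i \<in> {1..m}" "x \<in> P i" "k \<in> {1..m}" "y \<in> P k" using cover by blast
      have "(x, y) \<in> E \<longleftrightarrow> i = k" using Erel a by blast
      also have "\<dots> \<longleftrightarrow> c i = c k" using h a by (meson inj_on_eq_iff)
      also have "\<dots> \<longleftrightarrow> (f x, f y) \<in> E"
      proof -
        have ci: "c i \<in> {1..m}" "c k \<in> {1..m}" using cprop a by auto
        have fxy: "f x \<in> P (c i)" "f y \<in> P (c k)" using cin a by auto
        show ?thesis using Erel[OF ci fxy] by simp
      qed
      finally show "(x, y) \<in> E \<longleftrightarrow> (f x, f y) \<in> E" .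
    qed
  qed
  let ?T = "part_topology m P"
  have op: "\<And>U. openin ?T U \<longleftrightarrow> (\<exists>I \<subseteq> {1..m}. U = \<Union> (P ` I))"
    using part_open_iff[of m P] disj by blast
  have top: "topspace ?T = X"
  proof
    show "topspace ?T \<subseteq> X" unfolding topspace_def op using sub by blast
    have "openin ?T (\<Union> (P ` {1..m}))" using op by blast
    then show "X \<subseteq> topspace ?T" using cover openin_subset by blast
  qed
  have cont: "f \<in> S_part m P"
    unfolding S_part_def continuous_map_def
  proof (intro CollectI conjI allI impI)
    show "f \<in> topspace ?T \<rightarrow> topspace ?T" using top fX by auto
  next
    fix U assume "openin ?T U"
    then obtain J where J: "J \<subseteq> {1..m}" "U = \<Union> (P ` J)" using op by blast
    have "{x \<in> topspace ?T. f x \<in> U} = \<Union> (P ` {i \<in> {1..m}. c i \<in> J})"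
    proof
      show "{x \<in> topspace ?T. f x \<in> U} \<subseteq> \<Union> (P ` {i \<in> {1..m}. c i \<in> J})"
      proof
        fix x assume "x \<in> {x \<in> topspace ?T. f x \<in> U}"
        then obtain j where "x \<in> X" "j \<in> J" "f x \<in> P j" using top J by auto
        then show "x \<in> \<Union> (P ` {i \<in> {1..m}. c i \<in> J})" using hitP[of j x] J by blast
      qed
      show "\<Union> (P ` {i \<in> {1..m}. c i \<in> J}) \<subseteq> {x \<in> topspace ?T. f x \<in> U}"
        using top sub cin J by blast
    qed
    then show "openin ?T {x \<in> topspace ?T. f x \<in> U}"
      unfolding op by (intro exI[of _ "{i \<in> {1..m}. c i \<in> J}"]) auto
  qed
  have part3: "(\<forall>A. openin ?T A \<and> A \<noteq> {} \<longrightarrow> {x \<in> X. f x \<in> A} \<noteq> {})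
      \<longleftrightarrow> (\<forall>j\<in>{1..m}. \<exists>x\<in>X. f x \<in> P j)"
  proof
    assume h: "\<forall>A. openin ?T A \<and> A \<noteq> {} \<longrightarrow> {x \<in> X. f x \<in> A} \<noteq> {}"
    show "\<forall>j\<in>{1..m}. \<exists>x\<in>X. f x \<in> P j"
    proof
      fix j assume j: "j \<in> {1..m}"
      have "{j} \<subseteq> {1..m} \<and> P j = \<Union> (P ` {j})" using j by simp
      then have "openin ?T (P j)" unfolding op by (rule exI)
      then have "{x \<in> X. f x \<in> P j} \<noteq> {}" using h ne[OF j] by simp
      then show "\<exists>x\<in>X. f x \<in> P j" by auto
    qed
  next
    assume h: "\<forall>j\<in>{1..m}. \<exists>x\<in>X. f x \<in> P j"
    show "\<forall>A. openin ?T A \<and> A \<noteq> {} \<longrightarrow> {x \<in> X. f x \<in> A} \<noteq> {}"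
    proof (intro allI impI)
      fix A assume "openin ?T A \<and> A \<noteq> {}"
      then obtain I where "I \<subseteq> {1..m}" "A = \<Union> (P ` I)" "A \<noteq> {}" using op by blast
      then obtain j where "j \<in> I" "P j \<subseteq> A" "j \<in> {1..m}" by blast
      moreover obtain x where "x \<in> X" "f x \<in> P j" using h calculation(3) by blast
      ultimately show "{x \<in> X. f x \<in> A} \<noteq> {}" by blast
    qed
  qed
  have e3: "E_star_preserving X E f \<longleftrightarrow>
      (\<forall>A. openin ?T A \<and> A \<noteq> {} \<longrightarrow> {x \<in> X. f x \<in> A} \<noteq> {})"
  proof -
    have "E_star_preserving X E f \<longleftrightarrow> bij_betw c {1..m} {1..m}" using part2 bij_inj by simp
    also have "\<dots> \<longleftrightarrow> (\<forall>j\<in>{1..m}. \<exists>x\<in>X. f x \<in> P j)" using bij_surj surjiff by simp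
    also have "\<dots> \<longleftrightarrow> (\<forall>A. openin ?T A \<and> A \<noteq> {} \<longrightarrow> {x \<in> X. f x \<in> A} \<noteq> {})"
      using part3 by simp
    finally show ?thesis .
  qed
  have e2: "bij_betw c {1..m} {1..m} \<longleftrightarrow> E_star_preserving X E f"
    using bij_inj part2 by simp
  show ?thesis
    unfolding c_def[symmetric]
    using part1 e2 e3 cont by (intro conjI) simp_all
qed

end
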